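(* If $\mathcal{C}$ is a hypergraph with $\psi(\mathcal{C})=1$, then $\mathbb{S}^0$ is not contractible in $\operatorname{Ind}(\mathcal{C})$; that is, $\operatorname{Ind}(\mathcal{C})$ is nonempty but not path-connected.
   Context: A hypergraph $\mathcal{C}$ on a finite vertex set $V$ is a family of pairwise incomparable subsets of $V$ (its edges), each of cardinality at least $2$; vertices lying in no edge are allowed. The independence complex $\operatorname{Ind}(\mathcal{C})$ is the simplicial complex on $V$ whose faces are the subsets of $V$ containing no edge of $\mathcal{C}$. For an edge $F$: $\mathcal{C}-F$ is the hypergraph on $V$ with edge set $\mathcal{C}\setminus\{F\}$; $N_{\mathcal{C}}(F)=\bigcup\{E\setminus F : E\in\mathcal{C},\ |E\setminus F|=1\}$; and $\mathcal{C}:F$ is the hypergraph on $V\setminus(F\cup N_{\mathcal{C}}(F))$ whose edges are the members of cardinality at least $2$ among the inclusion-minimal members of the family $\{E\setminus F : E\in \mathcal{C}-F\}$. The number $\psi(\mathcal{C})\in\mathbb{Z}_{\ge 0}\cup\{\infty\}$ is defined recursively: $\psi(\mathcal{C})=0$ if $V=\emptyset$; $\psi(\mathcal{C})=\infty$ if $V\neq\emptyset$ and $\mathcal{C}$ has no edges; otherwise $\psi(\mathcal{C})=\max_{F\in\mathcal{C}}\min\{\psi(\mathcal{C}-F),\ \psi(\mathcal{C}:F)+|F|-1\}$. *)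

theory Defs
  imports "HOL-Analysis.Analysis" "HOL-Library.Extended_Nat"
begin

definition hypergraph :: "'a set \<Rightarrow> 'a set set \<Rightarrow> bool" where
  "hypergraph V C \<longleftrightarrow> finite V \<and> (\<forall>E\<in>C. E \<subseteq> V \<and> 2 \<le> card E)
     \<and> (\<forall>E\<in>C. \<forall>E'\<in>C. E \<subseteq> E' \<longrightarrow> E = E')"

definition Ind :: "'a set \<Rightarrow> 'a set set \<Rightarrow> 'a set set" where
  "Ind V C = {S. S \<subseteq> V \<and> \<not> (\<exists>E\<in>C. E \<subseteq> S)}"

definition nbhd :: "'a set set \<Rightarrow> 'a set \<Rightarrow> 'a set" where
  "nbhd C F = \<Union> {E - F | E. E \<in> C \<and> card (E - F) = 1}"

definition minimal_members :: "'a set set \<Rightarrow> 'a set set" where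
  "minimal_members S = {X \<in> S. \<forall>Y\<in>S. Y \<subseteq> X \<longrightarrow> Y = X}"

text \<open>Edge set of C:F (its vertex set is V - (F \<union> nbhd C F)).\<close>
definition colon_edges :: "'a set set \<Rightarrow> 'a set \<Rightarrow> 'a set set" where
  "colon_edges C F = {X \<in> minimal_members ((\<lambda>E. E - F) ` (C - {F})). 2 \<le> card X}"

lemma card_colon_edges_less:
  assumes "finite C" "F \<in> C"
  shows "card (colon_edges C F) < card C"
proof -
  have "colon_edges C F \<subseteq> (\<lambda>E. E - F) ` (C - {F})"
    unfolding colon_edges_def minimal_members_def by auto
  hence "card (colon_edges C F) \<le> card ((\<lambda>E. E - F) ` (C - {F}))"
    using assms by (intro card_mono) auto
  also have "\<dots> \<le> card (C - {F})" using assms by (intro card_image_le) auto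
  also have "\<dots> < card C" using assms by (meson card_Diff1_less)
  finally show ?thesis .
qed

text \<open>The invariant psi (values in enat, with \<infinity>). Outside finite inputs the value
  is an irrelevant default.\<close>
function psi :: "'a set \<Rightarrow> 'a set set \<Rightarrow> enat" where
  "psi V C = (if \<not> finite V \<or> \<not> finite C then 0
     else if V = {} then 0
     else if C = {} then \<infinity>
     else Max ((\<lambda>F. min (psi V (C - {F}))
                         (psi (V - (F \<union> nbhd C F)) (colon_edges C F) + enat (card F - 1))) ` C))"
  by pat_completeness auto
termination
  by (relation "Wellfounded.measure (\<lambda>(V, C). card C)")
     (simp_all add: card_colon_edges_less card_gt_0_iff)

text \<open>Geometric realization of a simplicial complex K on a finite vertex set V, as a
  subspace of the (product) space of real functions on the vertex type.\<close>
definition geom_real :: "'a set \<Rightarrow> 'a set set \<Rightarrow> ('a \<Rightarrow> real) set" where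
  "geom_real V K = {f. (\<forall>v. 0 \<le> f v) \<and> (\<forall>v. v \<notin> V \<longrightarrow> f v = 0)
      \<and> {v. f v \<noteq> 0} \<in> K \<and> sum f V = 1}"

end

theory Submission
  imports Defs
begin

declare psi.simps[simp del]

definition comb_sep :: "'a set \<Rightarrow> 'a set set \<Rightarrow> bool" where
  "comb_sep V C \<longleftrightarrow> (\<exists>U a b. U \<subseteq> V \<and> a \<in> U \<and> b \<in> V - U \<and>
      (\<forall>S\<in>Ind V C. S \<subseteq> U \<or> S \<inter> U = {}))"

lemma psi_step:
  assumes "finite V" "finite C" "V \<noteq> {}" "F \<in> C"
  shows "min (psi V (C - {F})) (psi (V - (F \<union> nbhd C F)) (colon_edges C F) + enat (card F - 1))
         \<le> psi V C"
proof -
  have "psi V C = Max ((\<lambda>F. min (psi V (C - {F}))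
                         (psi (V - (F \<union> nbhd C F)) (colon_edges C F) + enat (card F - 1))) ` C)"
    using assms by (subst psi.simps) auto
  thus ?thesis using assms by (auto intro!: Max_ge)
qed

lemma psi_empty: "finite V \<Longrightarrow> V \<noteq> {} \<Longrightarrow> psi V {} = \<infinity>"
  by (subst psi.simps) auto

lemma psi_ge1:
  assumes "finite V" "finite C" "V \<noteq> {}" "\<forall>E\<in>C. 2 \<le> card E"
  shows "1 \<le> psi V C"
  using assms(2,4)
proof (induction "card C" arbitrary: C rule: less_induct)
  case less
  show ?case
  proof (cases "C = {}")
    case True thus ?thesis using psi_empty[OF assms(1,3)] by simp
  next
    case False
    then obtain F where F: "F \<in> C" by auto
    have "1 \<le> psi V (C - {F})"
      using less F card_Diff1_less[OF less(2) F] by (intro less.hyps[of "C - {F}"]) auto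
    moreover have "1 \<le> psi (V - (F \<union> nbhd C F)) (colon_edges C F) + enat (card F - 1)"
    proof -
      have "2 \<le> card F" using less F by auto
      hence "1 \<le> enat (card F - 1)" by (simp add: one_enat_def)
      thus ?thesis by (metis add.commute dual_order.trans le_iff_add)
    qed
    ultimately show ?thesis
      using psi_step[OF assms(1) less(2) assms(3) F] by (meson min.bounded_iff order_trans)
  qed
qed

lemma key_sep:
  assumes edges: "\<forall>E\<in>C. E \<subseteq> V \<and> 2 \<le> card E"
    and F0: "F0 \<in> C"
    and all: "\<forall>F\<in>C. card F \<le> 2 \<and> V \<subseteq> F \<union> nbhd C F"
  shows "comb_sep V C"
proof -
  have "card F0 \<le> 2" "2 \<le> card F0" using all edges F0 by auto
  hence c2: "card F0 = 2" by simp
  then obtain a b where ab: "a \<noteq> b" "F0 = {a, b}" by (meson card_2_iff)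
  define U where "U = {v\<in>V. v = a \<or> {a, v} \<notin> C}"
  have aV: "a \<in> V" and bV: "b \<in> V" using edges F0 ab by auto
  have "a \<in> U" using aV U_def by auto
  moreover have "b \<in> V - U" using bV U_def ab F0 by auto
  moreover have "\<forall>S\<in>Ind V C. S \<subseteq> U \<or> S \<inter> U = {}"
  proof (rule ccontr)
    assume "\<not> ?thesis"
    then obtain S where S: "S \<in> Ind V C" and "\<not> S \<subseteq> U" "S \<inter> U \<noteq> {}" by blast
    then obtain x y where x: "x \<in> S" "x \<in> U" and y: "y \<in> S" "y \<notin> U" by blast
    have SV: "S \<subseteq> V" and noE: "\<And>E. E \<in> C \<Longrightarrow> \<not> E \<subseteq> S" using S unfolding Ind_def by auto
    have yV: "y \<in> V" using SV y by auto
    have ya: "y \<noteq> a" "{a, y} \<in> C" using y yV U_def by auto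
    have xV: "x \<in> V" using SV x by auto
    have xa: "x \<noteq> a" using noE[OF ya(2)] x y by auto
    have xa2: "{a, x} \<notin> C" using x xa U_def by auto
    have xy: "x \<noteq> y" using x y by auto
    have xyC: "{x, y} \<notin> C" using noE x y by auto
    have "card {a, y} \<le> 2 \<and> V \<subseteq> {a, y} \<union> nbhd C {a, y}" using all ya(2) by (rule bspec)
    hence "x \<in> {a, y} \<union> nbhd C {a, y}" using xV by blast
    hence "x \<in> nbhd C {a, y}" using xa xy by auto
    then obtain E where E: "E \<in> C" "card (E - {a, y}) = 1" "x \<in> E - {a, y}"
      unfolding nbhd_def by auto
    have "card E \<le> 2" "2 \<le> card E" using all edges E(1) by auto
    hence "card E = 2" by simp
    then obtain p q where pq: "p \<noteq> q" "E = {p, q}" by (meson card_2_iff)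
    have "E = {x, a} \<or> E = {x, y}"
    proof -
      have "p \<in> {a, y} \<or> q \<in> {a, y}"
      proof (rule ccontr)
        assume "\<not> ?thesis"
        hence "E - {a, y} = {p, q}" using pq by auto
        thus False using E(2) pq by auto
      qed
      thus ?thesis using pq E(3) by auto
    qed
    thus False using E(1) xa2 xyC by (metis insert_commute)
  qed
  moreover have "U \<subseteq> V" unfolding U_def by auto
  ultimately show ?thesis unfolding comb_sep_def by (intro exI[of _ U] exI[of _ a] exI[of _ b]) simp
qed

lemma comb_main:
  assumes "finite V" "finite C" "V \<noteq> {}" "\<forall>E\<in>C. E \<subseteq> V \<and> 2 \<le> card E"
    and "\<not> comb_sep V C"
  shows "2 \<le> psi V C"
  using assms(2,4,5)
proof (induction "card C" arbitrary: C rule: less_induct)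
  case less
  show ?case
  proof (cases "C = {}")
    case True thus ?thesis using psi_empty[OF assms(1,3)] by simp
  next
    case False
    obtain F where F: "F \<in> C" and Fgood: "card F \<ge> 3 \<or> V - (F \<union> nbhd C F) \<noteq> {}"
    proof -
      have "\<exists>F\<in>C. \<not> (card F \<le> 2 \<and> V \<subseteq> F \<union> nbhd C F)"
      proof (rule ccontr)
        assume "\<not> ?thesis"
        hence "\<forall>F\<in>C. card F \<le> 2 \<and> V \<subseteq> F \<union> nbhd C F" by blast
        moreover obtain F0 where "F0 \<in> C" using False by auto
        ultimately have "comb_sep V C" using key_sep less(3) by blast
        thus False using less(4) by blast
      qed
      thus ?thesis using that by force
    qed
    have "\<not> comb_sep V (C - {F})"
    proof
      assume "comb_sep V (C - {F})"
      then obtain U a b where U: "U \<subseteq> V" "a \<in> U" "b \<in> V - U"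
        and s: "\<forall>S\<in>Ind V (C - {F}). S \<subseteq> U \<or> S \<inter> U = {}"
        unfolding comb_sep_def by blast
      moreover have "Ind V C \<subseteq> Ind V (C - {F})" unfolding Ind_def by auto
      ultimately have "\<forall>S\<in>Ind V C. S \<subseteq> U \<or> S \<inter> U = {}" by blast
      hence "comb_sep V C" unfolding comb_sep_def using U by (intro exI[of _ U] exI[of _ a] exI[of _ b]) simp
      thus False using less(4) by blast
    qed
    hence "2 \<le> psi V (C - {F})"
      using less F card_Diff1_less[OF less(2) F] by (intro less.hyps[of "C - {F}"]) auto
    moreover have "2 \<le> psi (V - (F \<union> nbhd C F)) (colon_edges C F) + enat (card F - 1)"
    proof (cases "card F \<ge> 3")
      case True
      hence "2 \<le> enat (card F - 1)" by (simp add: numeral_eq_enat)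
      thus ?thesis by (metis add.commute dual_order.trans le_iff_add)
    next
      case False
      hence ne: "V - (F \<union> nbhd C F) \<noteq> {}" using Fgood by auto
      have fin: "finite (colon_edges C F)"
        using less(2) unfolding colon_edges_def minimal_members_def by auto
      have "1 \<le> psi (V - (F \<union> nbhd C F)) (colon_edges C F)"
        by (rule psi_ge1) (use assms(1) ne fin in \<open>auto simp: colon_edges_def\<close>)
      moreover have "1 \<le> enat (card F - 1)"
      proof -
        have "2 \<le> card F" using less(3) F by auto
        thus ?thesis by (simp add: one_enat_def)
      qed
      ultimately have "1 + 1 \<le> psi (V - (F \<union> nbhd C F)) (colon_edges C F) + enat (card F - 1)"
        by (rule add_mono)
      thus ?thesis by (simp add: one_add_one)
    qed
    ultimately show ?thesis
      using psi_step[OF assms(1) less(2) assms(3) F] by (meson min.bounded_iff order_trans)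
  qed
qed

lemma delta_in:
  assumes "finite V" "a \<in> V" "\<forall>E\<in>C. 2 \<le> card E"
  shows "(\<lambda>v. if v = a then 1 else 0) \<in> geom_real V (Ind V C)"
proof -
  have sup: "{v. (if v = a then 1 else 0::real) \<noteq> 0} = {a}" by auto
  have noE: "\<not> (\<exists>E\<in>C. E \<subseteq> {a})"
  proof
    assume "\<exists>E\<in>C. E \<subseteq> {a}"
    then obtain E where E: "E \<in> C" "E \<subseteq> {a}" by blast
    have "card E \<le> card {a}" using E(2) by (intro card_mono) auto
    hence "card E \<le> 1" by simp
    thus False using assms(3) E(1) by fastforce
  qed
  have "{a} \<in> Ind V C" unfolding Ind_def using noE assms(2) by blast
  moreover have "sum (\<lambda>v. if v = a then 1 else 0::real) V = 1"
    using assms by (simp add: sum.delta)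
  ultimately show ?thesis unfolding geom_real_def sup using assms by auto
qed

lemma topo:
  assumes "finite V" "\<forall>E\<in>C. 2 \<le> card E" "comb_sep V C"
  shows "\<not> connected (geom_real V (Ind V C))"
proof
  assume conn: "connected (geom_real V (Ind V C))"
  obtain U a b where U: "U \<subseteq> V" "a \<in> U" "b \<in> V - U"
    and sep: "\<forall>S\<in>Ind V C. S \<subseteq> U \<or> S \<inter> U = {}"
    using assms(3) unfolding comb_sep_def by blast
  let ?X = "geom_real V (Ind V C)"
  let ?g = "\<lambda>f::'a\<Rightarrow>real. sum f U"
  have finU: "finite U" using U assms(1) finite_subset by auto
  have "continuous_on UNIV ?g"
    by (intro continuous_intros continuous_on_product_coordinates)
  hence "continuous_on ?X ?g" using continuous_on_subset by blast
  hence ci: "connected (?g ` ?X)"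
    using conn connected_continuous_image by blast
  have h1: "1 \<in> ?g ` ?X"
  proof
    show "(\<lambda>v. if v = a then 1 else 0) \<in> ?X" using delta_in[OF assms(1) _ assms(2)] U by blast
    show "1 = ?g (\<lambda>v. if v = a then 1 else 0)" using finU U by (simp add: sum.delta)
  qed
  have h0: "0 \<in> ?g ` ?X"
  proof
    show "(\<lambda>v. if v = b then 1 else 0) \<in> ?X" using delta_in[OF assms(1) _ assms(2)] U by blast
    show "0 = ?g (\<lambda>v. if v = b then 1 else 0)" using finU U by (simp add: sum.delta)
  qed
  have "\<forall>x\<in>?g ` ?X. \<forall>y\<in>?g ` ?X. \<forall>z\<ge>x. z \<le> y \<longrightarrow> z \<in> ?g ` ?X"
    using ci by (simp only: connected_iff_interval)
  hence "\<And>z. 0 \<le> z \<Longrightarrow> z \<le> 1 \<Longrightarrow> z \<in> ?g ` ?X" using h0 h1 by blast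
  hence "1/2 \<in> ?g ` ?X" by simp
  then obtain f where f: "f \<in> ?X" "sum f U = 1/2" by auto
  have nn: "\<forall>v. 0 \<le> f v" and out: "\<forall>v. v \<notin> V \<longrightarrow> f v = 0"
    and supp: "{v. f v \<noteq> 0} \<in> Ind V C" and s1: "sum f V = 1"
    using f(1) unfolding geom_real_def mem_Collect_eq by blast+
  from sep supp have "{v. f v \<noteq> 0} \<subseteq> U \<or> {v. f v \<noteq> 0} \<inter> U = {}" by (rule bspec)
  thus False
  proof
    assume h: "{v. f v \<noteq> 0} \<subseteq> U"
    have "sum f V = sum f U"
    proof (rule sum.mono_neutral_right)
      show "finite V" by (rule assms(1))
      show "U \<subseteq> V" by (rule U(1))
      show "\<forall>i\<in>V - U. f i = 0" using h by blast
    qed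
    thus False using s1 f by simp
  next
    assume h: "{v. f v \<noteq> 0} \<inter> U = {}"
    have "sum f U = 0" by (rule sum.neutral) (use h in auto)
    thus False using f by simp
  qed
qed

theorem lemma3p6:
  fixes V :: "'a set" and C :: "'a set set"
  assumes "hypergraph V C"
    and "psi V C = 1"
  shows "geom_real V (Ind V C) \<noteq> {} \<and> \<not> path_connected (geom_real V (Ind V C))"
proof -
  have finV: "finite V" and edges: "\<forall>E\<in>C. E \<subseteq> V \<and> 2 \<le> card E"
    using assms(1) unfolding hypergraph_def by auto
  have finC: "finite C"
    using finV edges by (meson Pow_iff finite_Pow_iff rev_finite_subset subsetI)
  have Vne: "V \<noteq> {}"
  proof
    assume "V = {}"
    hence "psi V C = 0" by (subst psi.simps) auto
    thus False using assms(2) by simp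
  qed
  then obtain a where a: "a \<in> V" by auto
  have ne: "geom_real V (Ind V C) \<noteq> {}" using delta_in[OF finV a] edges by blast
  have "comb_sep V C"
  proof (rule ccontr)
    assume "\<not> comb_sep V C"
    hence "2 \<le> psi V C" using comb_main finV finC Vne edges by blast
    thus False using assms(2) by (simp add: one_enat_def numeral_eq_enat)
  qed
  hence "\<not> connected (geom_real V (Ind V C))" using topo finV edges by blast
  thus ?thesis using ne path_connected_imp_connected by blast
qed

end
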